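(* Under the standing assumptions below, the map $\theta\mapsto-\bar g(\theta)$ is a gradient splitting of the quadratic $$f(\theta)=(1-\gamma)\|V_\theta-V_{\theta^*}\|_D^2+\gamma\|V_\theta-V_{\theta^*}\|_{\rm Dir}^2 .$$ Explicitly, $-\bar g(\theta)=B(\theta-\theta^* )$ with $B=E[\phi(\phi-\gamma\phi')^T]$, $f(\theta)=(\theta-\theta^* )^TB(\theta-\theta^* )$, and $B+B^T=2A$ where $A$ is the symmetric matrix with $f(\theta)=(\theta-\theta^* )^TA(\theta-\theta^* )$; here $\phi=\phi(s)$, $\phi'=\phi(s')$ with $s\sim\pi$ and $s'\sim P(s,\cdot)$.
   Context: Setting: finite state space $\mathcal S=[n]$, a fixed policy inducing a transition matrix $P\in\mathbb{R}^{n\times n}$ which is irreducible and aperiodic, with unique stationary distribution $\pi=(\pi_1,\dots,\pi_n)$ (row vector); $D=\mathrm{diag}(\pi_1,\dots,\pi_n)$. Rewards $r(s,a,s')$ are deterministic and bounded, $r(s,s')=\sum_a\mu(s,a)r(s,a,s')$ where $\mu$ is the policy; $\gamma\in(0,1)$ is the discount factor. Features: $\Phi=[\phi_1,\dots,\phi_K]\in\mathbb{R}^{n\times K}$ has full column rank, $\phi(s)=(\phi_1(s),\dots,\phi_K(s))^T$ with $\|\phi(s)\|_2\le 1$, and $V_\theta=\Phi\theta$ (so $V_\theta(s)=\theta^T\phi(s)$). Norms: $\|V\|_D^2=\sum_s\pi_sV(s)^2$; Dirichlet seminorm $\|V\|_{\rm Dir}^2=\frac12\sum_{s,s'}\pi_sP(s,s')(V(s')-V(s))^2$.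 Mean TD(0) direction: $\bar g(\theta)=\sum_{s,s'}\pi_sP(s,s')\big(r(s,s')+\gamma\phi(s')^T\theta-\phi(s)^T\theta\big)\phi(s)$, and $\theta^*$ is the unique vector with $\bar g(\theta^* )=0$. Gradient splitting: for symmetric PSD $A$ and $f(\theta)=(\theta-a)^TA(\theta-a)$, a linear map $h(\theta)=B(\theta-a)$ is a gradient splitting of $f$ if $B+B^T=2A$. *)

theory Defs
  imports "HOL-Analysis.Analysis"
begin

fun mpow :: "('s::finite \<Rightarrow> 's \<Rightarrow> real) \<Rightarrow> nat \<Rightarrow> 's \<Rightarrow> 's \<Rightarrow> real" where
  "mpow P 0 = (\<lambda>s s'. if s = s' then 1 else 0)"
| "mpow P (Suc n) = (\<lambda>s s'. \<Sum>u\<in>UNIV. mpow P n s u * P u s')"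

definition stochastic :: "('s::finite \<Rightarrow> 's \<Rightarrow> real) \<Rightarrow> bool" where
  "stochastic P \<longleftrightarrow> (\<forall>s s'. P s s' \<ge> 0) \<and> (\<forall>s. (\<Sum>s'\<in>UNIV. P s s') = 1)"

definition irreducible_chain :: "('s::finite \<Rightarrow> 's \<Rightarrow> real) \<Rightarrow> bool" where
  "irreducible_chain P \<longleftrightarrow> (\<forall>s s'. \<exists>n>0. mpow P n s s' > 0)"

definition aperiodic_chain :: "('s::finite \<Rightarrow> 's \<Rightarrow> real) \<Rightarrow> bool" where
  "aperiodic_chain P \<longleftrightarrow> (\<forall>s. Gcd {n::nat. n > 0 \<and> mpow P n s s > 0} = 1)"

definition stationary_dist :: "('s::finite \<Rightarrow> 's \<Rightarrow> real) \<Rightarrow> ('s \<Rightarrow> real) \<Rightarrow> bool" where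
  "stationary_dist P \<pi> \<longleftrightarrow> (\<forall>s. \<pi> s \<ge> 0) \<and> (\<Sum>s\<in>UNIV. \<pi> s) = 1
     \<and> (\<forall>s'. (\<Sum>s\<in>UNIV. \<pi> s * P s s') = \<pi> s')"

definition pol_reward :: "('s \<Rightarrow> 'a::finite \<Rightarrow> real) \<Rightarrow> ('s \<Rightarrow> 'a \<Rightarrow> 's \<Rightarrow> real) \<Rightarrow> 's \<Rightarrow> 's \<Rightarrow> real" where
  "pol_reward \<mu> r s s' = (\<Sum>a\<in>UNIV. \<mu> s a * r s a s')"

definition Vlin :: "('s \<Rightarrow> real^'k) \<Rightarrow> real^'k \<Rightarrow> 's \<Rightarrow> real" where
  "Vlin \<phi> \<theta> s = \<theta> \<bullet> \<phi> s"

definition full_col_rank :: "('s \<Rightarrow> real^'k) \<Rightarrow> bool" where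
  "full_col_rank \<phi> \<longleftrightarrow> (\<forall>\<theta>. (\<forall>s. \<theta> \<bullet> \<phi> s = 0) \<longrightarrow> \<theta> = 0)"

definition D_norm_sq :: "('s::finite \<Rightarrow> real) \<Rightarrow> ('s \<Rightarrow> real) \<Rightarrow> real" where
  "D_norm_sq \<pi> V = (\<Sum>s\<in>UNIV. \<pi> s * (V s)\<^sup>2)"

definition Dir_norm_sq :: "('s::finite \<Rightarrow> 's \<Rightarrow> real) \<Rightarrow> ('s \<Rightarrow> real) \<Rightarrow> ('s \<Rightarrow> real) \<Rightarrow> real" where
  "Dir_norm_sq P \<pi> V = (1/2) * (\<Sum>s\<in>UNIV. \<Sum>s'\<in>UNIV. \<pi> s * P s s' * (V s' - V s)\<^sup>2)"

definition gbar :: "('s::finite \<Rightarrow> 's \<Rightarrow> real) \<Rightarrow> ('s \<Rightarrow> real) \<Rightarrow> ('s \<Rightarrow> 's \<Rightarrow> real)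
    \<Rightarrow> real \<Rightarrow> ('s \<Rightarrow> real^'k) \<Rightarrow> real^'k \<Rightarrow> real^'k" where
  "gbar P \<pi> rr \<gamma> \<phi> \<theta> = (\<Sum>s\<in>UNIV. \<Sum>s'\<in>UNIV.
      (\<pi> s * P s s' * (rr s s' + \<gamma> * (\<phi> s' \<bullet> \<theta>) - \<phi> s \<bullet> \<theta>)) *\<^sub>R \<phi> s)"

definition Bmat :: "('s::finite \<Rightarrow> 's \<Rightarrow> real) \<Rightarrow> ('s \<Rightarrow> real) \<Rightarrow> real \<Rightarrow> ('s \<Rightarrow> real^'k) \<Rightarrow> real^'k^'k" where
  "Bmat P \<pi> \<gamma> \<phi> = (\<chi> i j. \<Sum>s\<in>UNIV. \<Sum>s'\<in>UNIV.
      \<pi> s * P s s' * (\<phi> s $ i * (\<phi> s $ j - \<gamma> * \<phi> s' $ j)))"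

definition psd :: "real^'k^'k \<Rightarrow> bool" where
  "psd A \<longleftrightarrow> (\<forall>x. 0 \<le> x \<bullet> (A *v x))"

definition gradient_splitting :: "(real^'k \<Rightarrow> real^'k) \<Rightarrow> (real^'k \<Rightarrow> real) \<Rightarrow> bool" where
  "gradient_splitting h f \<longleftrightarrow> (\<exists>A B a. transpose A = A \<and> psd A
      \<and> (\<forall>\<theta>. f \<theta> = (\<theta> - a) \<bullet> (A *v (\<theta> - a)))
      \<and> (\<forall>\<theta>. h \<theta> = B *v (\<theta> - a))
      \<and> B + transpose B = 2 *\<^sub>R A)"

end

theory Submission
  imports Defs
begin

lemma Bmat_mult:
  "Bmat P \<pi> \<gamma> \<phi> *v x = (\<Sum>s\<in>UNIV. \<Sum>s'\<in>UNIV. (\<pi> s * P s s' * (\<phi> s \<bullet> x - \<gamma> * (\<phi> s' \<bullet> x))) *\<^sub>R \<phi> s)"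
proof (subst vec_eq_iff, intro allI)
  fix i
  have "(Bmat P \<pi> \<gamma> \<phi> *v x) $ i = (\<Sum>j\<in>UNIV. (\<Sum>s\<in>UNIV. \<Sum>s'\<in>UNIV.
      \<pi> s * P s s' * (\<phi> s $ i * (\<phi> s $ j - \<gamma> * \<phi> s' $ j))) * x $ j)"
    by (simp add: matrix_vector_mult_def Bmat_def)
  also have "\<dots> = (\<Sum>j\<in>UNIV. \<Sum>s\<in>UNIV. \<Sum>s'\<in>UNIV.
      \<pi> s * P s s' * (\<phi> s $ i * (\<phi> s $ j - \<gamma> * \<phi> s' $ j)) * x $ j)"
    by (simp only: sum_distrib_right)
  also have "\<dots> = (\<Sum>s\<in>UNIV. \<Sum>j\<in>UNIV. \<Sum>s'\<in>UNIV.
      \<pi> s * P s s' * (\<phi> s $ i * (\<phi> s $ j - \<gamma> * \<phi> s' $ j)) * x $ j)"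
    by (rule sum.swap)
  also have "\<dots> = (\<Sum>s\<in>UNIV. \<Sum>s'\<in>UNIV. \<Sum>j\<in>UNIV.
      \<pi> s * P s s' * (\<phi> s $ i * (\<phi> s $ j - \<gamma> * \<phi> s' $ j)) * x $ j)"
    by (intro sum.cong refl sum.swap)
  also have "\<dots> = (\<Sum>s\<in>UNIV. \<Sum>s'\<in>UNIV.
      (\<pi> s * P s s' * (\<phi> s \<bullet> x - \<gamma> * (\<phi> s' \<bullet> x))) * \<phi> s $ i)"
  proof (intro sum.cong refl)
    fix s s'
    have "(\<Sum>j\<in>UNIV. \<pi> s * P s s' * (\<phi> s $ i * (\<phi> s $ j - \<gamma> * \<phi> s' $ j)) * x $ j)
       = (\<pi> s * P s s' * \<phi> s $ i) * ((\<Sum>j\<in>UNIV. \<phi> s $ j * x $ j) - \<gamma> * (\<Sum>j\<in>UNIV. \<phi> s' $ j * x $ j))"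
      by (simp add: sum_distrib_left sum_subtractf algebra_simps)
    thus "(\<Sum>j\<in>UNIV. \<pi> s * P s s' * (\<phi> s $ i * (\<phi> s $ j - \<gamma> * \<phi> s' $ j)) * x $ j)
       = (\<pi> s * P s s' * (\<phi> s \<bullet> x - \<gamma> * (\<phi> s' \<bullet> x))) * \<phi> s $ i"
      by (simp add: inner_vec_def)
  qed
  also have "\<dots> = (\<Sum>s\<in>UNIV. \<Sum>s'\<in>UNIV. (\<pi> s * P s s' * (\<phi> s \<bullet> x - \<gamma> * (\<phi> s' \<bullet> x))) *\<^sub>R \<phi> s) $ i"
    by (simp add: sum_component)
  finally show "(Bmat P \<pi> \<gamma> \<phi> *v x) $ i = (\<Sum>s\<in>UNIV. \<Sum>s'\<in>UNIV. (\<pi> s * P s s' * (\<phi> s \<bullet> x - \<gamma> * (\<phi> s' \<bullet> x))) *\<^sub>R \<phi> s) $ i" .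
qed

lemma quad_B:
  "x \<bullet> (Bmat P \<pi> \<gamma> \<phi> *v x) = (\<Sum>s\<in>UNIV. \<Sum>s'\<in>UNIV. \<pi> s * P s s' * (\<phi> s \<bullet> x - \<gamma> * (\<phi> s' \<bullet> x)) * (\<phi> s \<bullet> x))"
  by (simp add: Bmat_mult inner_sum_right inner_commute)

lemma gbar_diff:
  "gbar P \<pi> rr \<gamma> \<phi> \<theta> - gbar P \<pi> rr \<gamma> \<phi> t = - (Bmat P \<pi> \<gamma> \<phi> *v (\<theta> - t))"
  unfolding gbar_def Bmat_mult
  by (simp add: sum_subtractf[symmetric] sum_negf[symmetric] scaleR_diff_left[symmetric]
      inner_diff_right inner_commute algebra_simps)

lemma f_quad:
  fixes P :: "'s::finite \<Rightarrow> 's \<Rightarrow> real"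
  assumes st: "stochastic P" and sd: "stationary_dist P \<pi>"
  shows "(1 - \<gamma>) * D_norm_sq \<pi> v + \<gamma> * Dir_norm_sq P \<pi> v
     = (\<Sum>s\<in>UNIV. \<Sum>s'\<in>UNIV. \<pi> s * P s s' * (v s - \<gamma> * v s') * v s)"
proof -
  have rows: "\<And>s. (\<Sum>s'\<in>UNIV. P s s') = 1" using st by (simp add: stochastic_def)
  have stat: "\<And>s'. (\<Sum>s\<in>UNIV. \<pi> s * P s s') = \<pi> s'" using sd by (simp add: stationary_dist_def)
  have a: "(\<Sum>s\<in>UNIV. \<Sum>s'\<in>UNIV. \<pi> s * P s s' * (v s)\<^sup>2) = D_norm_sq \<pi> v"
  proof -
    have "\<And>s. (\<Sum>s'\<in>UNIV. \<pi> s * P s s' * (v s)\<^sup>2) = \<pi> s * (v s)\<^sup>2 * (\<Sum>s'\<in>UNIV. P s s')"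
      by (simp add: sum_distrib_left[symmetric] sum_distrib_right[symmetric] mult.assoc)
    hence "(\<Sum>s\<in>UNIV. \<Sum>s'\<in>UNIV. \<pi> s * P s s' * (v s)\<^sup>2) = (\<Sum>s\<in>UNIV. \<pi> s * (v s)\<^sup>2 * (\<Sum>s'\<in>UNIV. P s s'))"
      by simp
    thus ?thesis by (simp add: rows D_norm_sq_def)
  qed
  have b: "(\<Sum>s\<in>UNIV. \<Sum>s'\<in>UNIV. \<pi> s * P s s' * (v s')\<^sup>2) = D_norm_sq \<pi> v"
  proof -
    have "(\<Sum>s\<in>UNIV. \<Sum>s'\<in>UNIV. \<pi> s * P s s' * (v s')\<^sup>2) = (\<Sum>s'\<in>UNIV. (\<Sum>s\<in>UNIV. \<pi> s * P s s') * (v s')\<^sup>2)"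
      by (subst sum.swap) (simp add: sum_distrib_right)
    thus ?thesis by (simp add: stat D_norm_sq_def)
  qed
  define C where "C = (\<Sum>s\<in>UNIV. \<Sum>s'\<in>UNIV. \<pi> s * P s s' * (v s' * v s))"
  have dir: "Dir_norm_sq P \<pi> v = D_norm_sq \<pi> v - C"
  proof -
    have "(\<Sum>s\<in>UNIV. \<Sum>s'\<in>UNIV. \<pi> s * P s s' * (v s' - v s)\<^sup>2)
      = (\<Sum>s\<in>UNIV. \<Sum>s'\<in>UNIV. \<pi> s * P s s' * (v s')\<^sup>2) + (\<Sum>s\<in>UNIV. \<Sum>s'\<in>UNIV. \<pi> s * P s s' * (v s)\<^sup>2) - 2 * C"
    proof -
      have "(\<Sum>s\<in>UNIV. \<Sum>s'\<in>UNIV. \<pi> s * P s s' * (v s' - v s)\<^sup>2)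
        = (\<Sum>s\<in>UNIV. \<Sum>s'\<in>UNIV. (\<pi> s * P s s' * (v s')\<^sup>2 + \<pi> s * P s s' * (v s)\<^sup>2) - 2 * (\<pi> s * P s s' * (v s' * v s)))"
        by (intro sum.cong refl) (simp add: power2_eq_square algebra_simps)
      thus ?thesis unfolding C_def
        by (simp only: sum.distrib sum_subtractf sum_distrib_left[symmetric])
    qed
    thus ?thesis using a b by (simp add: Dir_norm_sq_def)
  qed
  have rhs: "(\<Sum>s\<in>UNIV. \<Sum>s'\<in>UNIV. \<pi> s * P s s' * (v s - \<gamma> * v s') * v s)
     = (\<Sum>s\<in>UNIV. \<Sum>s'\<in>UNIV. \<pi> s * P s s' * (v s)\<^sup>2) - \<gamma> * C"
  proof -
    have "(\<Sum>s\<in>UNIV. \<Sum>s'\<in>UNIV. \<pi> s * P s s' * (v s - \<gamma> * v s') * v s)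
      = (\<Sum>s\<in>UNIV. \<Sum>s'\<in>UNIV. \<pi> s * P s s' * (v s)\<^sup>2 - \<gamma> * (\<pi> s * P s s' * (v s' * v s)))"
      by (intro sum.cong refl) (simp add: power2_eq_square algebra_simps)
    thus ?thesis unfolding C_def
      by (simp only: sum_subtractf sum_distrib_left[symmetric])
  qed
  show ?thesis by (simp only: rhs a dir) (simp add: algebra_simps)
qed

lemma quad_transpose: "x \<bullet> (transpose B *v x) = x \<bullet> ((B::real^'k^'k) *v x)"
proof -
  have "x \<bullet> (transpose B *v x) = (\<Sum>j\<in>UNIV. \<Sum>i\<in>UNIV. x $ j * (B $ i $ j * x $ i))"
    by (simp add: inner_vec_def matrix_vector_mult_def transpose_def sum_distrib_left)
  also have "\<dots> = (\<Sum>i\<in>UNIV. \<Sum>j\<in>UNIV. x $ j * (B $ i $ j * x $ i))"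
    by (rule sum.swap)
  also have "\<dots> = (\<Sum>i\<in>UNIV. \<Sum>j\<in>UNIV. x $ i * (B $ i $ j * x $ j))"
    by (intro sum.cong refl) (simp add: algebra_simps)
  also have "\<dots> = (\<Sum>i\<in>UNIV. x $ i * (\<Sum>j\<in>UNIV. B $ i $ j * x $ j))"
    by (simp only: sum_distrib_left)
  also have "\<dots> = x \<bullet> (B *v x)"
    by (simp add: inner_vec_def matrix_vector_mult_def)
  finally show ?thesis .
qed

lemma half_mult: "((1/2) *\<^sub>R (B + transpose B)) *v x = (1/2) *\<^sub>R (B *v x + transpose B *v x)"
  for B :: "real^'k^'k"
  by (simp add: vec_eq_iff matrix_vector_mult_def sum.distrib sum_distrib_left algebra_simps)

lemma half_transpose: "transpose ((1/2) *\<^sub>R (B + transpose B)) = (1/2) *\<^sub>R (B + transpose B)"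
  for B :: "real^'k^'k"
  by (simp add: vec_eq_iff transpose_def)

lemma Dnonneg: "(\<forall>s. \<pi> s \<ge> 0) \<Longrightarrow> D_norm_sq \<pi> v \<ge> 0"
  by (simp add: D_norm_sq_def sum_nonneg)

lemma Dirnonneg: "(\<forall>s. \<pi> s \<ge> 0) \<Longrightarrow> (\<forall>s s'. P s s' \<ge> 0) \<Longrightarrow> Dir_norm_sq P \<pi> v \<ge> 0"
  unfolding Dir_norm_sq_def by (intro mult_nonneg_nonneg sum_nonneg) auto

theorem theorem1:
  fixes P :: "'s::finite \<Rightarrow> 's \<Rightarrow> real" and \<pi> :: "'s \<Rightarrow> real"
    and \<mu> :: "'s \<Rightarrow> 'a::finite \<Rightarrow> real" and r :: "'s \<Rightarrow> 'a \<Rightarrow> 's \<Rightarrow> real"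
    and \<gamma> :: real and \<phi> :: "'s \<Rightarrow> real^'k" and \<theta>s :: "real^'k"
  assumes "stochastic P" and "irreducible_chain P" and "aperiodic_chain P"
    and "stationary_dist P \<pi>"
    and "\<forall>s a. \<mu> s a \<ge> 0" and "\<forall>s. (\<Sum>a\<in>UNIV. \<mu> s a) = 1"
    and "0 < \<gamma>" and "\<gamma> < 1"
    and "full_col_rank \<phi>" and "\<forall>s. norm (\<phi> s) \<le> 1"
    and "gbar P \<pi> (pol_reward \<mu> r) \<gamma> \<phi> \<theta>s = 0"
  defines "f \<equiv> (\<lambda>\<theta>. (1 - \<gamma>) * D_norm_sq \<pi> (\<lambda>s. Vlin \<phi> \<theta> s - Vlin \<phi> \<theta>s s)
                     + \<gamma> * Dir_norm_sq P \<pi> (\<lambda>s. Vlin \<phi> \<theta> s - Vlin \<phi> \<theta>s s))"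
    and "B \<equiv> Bmat P \<pi> \<gamma> \<phi>"
  shows "gradient_splitting (\<lambda>\<theta>. - gbar P \<pi> (pol_reward \<mu> r) \<gamma> \<phi> \<theta>) f
    \<and> (\<forall>\<theta>. - gbar P \<pi> (pol_reward \<mu> r) \<gamma> \<phi> \<theta> = B *v (\<theta> - \<theta>s))
    \<and> (\<forall>\<theta>. f \<theta> = (\<theta> - \<theta>s) \<bullet> (B *v (\<theta> - \<theta>s)))
    \<and> (\<exists>A. transpose A = A \<and> (\<forall>\<theta>. f \<theta> = (\<theta> - \<theta>s) \<bullet> (A *v (\<theta> - \<theta>s)))
          \<and> B + transpose B = 2 *\<^sub>R A)"
  proof -
  have pi0: "\<forall>s. \<pi> s \<ge> 0" using assms(4) by (simp add: stationary_dist_def)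
  have P0: "\<forall>s s'. P s s' \<ge> 0" using assms(1) by (simp add: stochastic_def)
  have vl: "\<And>\<theta>. (\<lambda>s. Vlin \<phi> \<theta> s - Vlin \<phi> \<theta>s s) = (\<lambda>s. \<phi> s \<bullet> (\<theta> - \<theta>s))"
    by (simp add: Vlin_def inner_diff_right inner_commute)
  have fB: "\<forall>\<theta>. f \<theta> = (\<theta> - \<theta>s) \<bullet> (B *v (\<theta> - \<theta>s))"
    unfolding f_def B_def vl quad_B using f_quad[OF assms(1) assms(4)] by simp
  have gB: "\<forall>\<theta>. - gbar P \<pi> (pol_reward \<mu> r) \<gamma> \<phi> \<theta> = B *v (\<theta> - \<theta>s)"
    using gbar_diff[of P \<pi> "pol_reward \<mu> r" \<gamma> \<phi> _ \<theta>s] assms(11) unfolding B_def by simp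
  define A where "A = (1/2) *\<^sub>R (B + transpose B)"
  have Aq: "\<And>x. x \<bullet> (A *v x) = x \<bullet> (B *v x)"
    unfolding A_def half_mult inner_scaleR_right inner_add_right quad_transpose by simp
  have fA: "\<forall>\<theta>. f \<theta> = (\<theta> - \<theta>s) \<bullet> (A *v (\<theta> - \<theta>s))" using fB Aq by simp
  have At: "transpose A = A" unfolding A_def by (rule half_transpose)
  have BA: "B + transpose B = 2 *\<^sub>R A" unfolding A_def by simp
  have fnn: "\<And>\<theta>. f \<theta> \<ge> 0"
    unfolding f_def using Dnonneg[OF pi0] Dirnonneg[OF pi0 P0] assms(7,8)
    by (intro add_nonneg_nonneg mult_nonneg_nonneg) auto
  have psdA: "psd A" unfolding psd_def
  proof
    fix x
    have "f (x + \<theta>s) \<ge> 0" by (rule fnn)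
    thus "0 \<le> x \<bullet> (A *v x)" using fA by simp
  qed
  have gs: "gradient_splitting (\<lambda>\<theta>. - gbar P \<pi> (pol_reward \<mu> r) \<gamma> \<phi> \<theta>) f"
    unfolding gradient_splitting_def
    apply (rule exI[of _ A], rule exI[of _ B], rule exI[of _ \<theta>s])
    using At psdA fA gB BA by (intro conjI)
  have ex: "\<exists>A. transpose A = A \<and> (\<forall>\<theta>. f \<theta> = (\<theta> - \<theta>s) \<bullet> (A *v (\<theta> - \<theta>s)))
          \<and> B + transpose B = 2 *\<^sub>R A"
    apply (rule exI[of _ A])
    using At fA BA by (intro conjI)
  show ?thesis using gs gB fB ex by (intro conjI)
qed

end
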